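(* Let $\mathbf{x}$ be a random vector in $\mathbb{R}^k$ with (differentiable) pdf $p_{\mathbf{x}}$ and score function $\boldsymbol{\Psi}_{\mathbf{x}}=\nabla\log p_{\mathbf{x}}$, and let $\tilde{\mathbf{x}}=\mathbf{x}+\mathbf{n}$ where $\mathbf{n}$ is Gaussian with mean zero and covariance $\boldsymbol{\Sigma}_{\mathbf{n}}$, independent of $\mathbf{x}$; let $\boldsymbol{\Psi}_{\tilde{\mathbf{x}}}=\nabla\log p_{\tilde{\mathbf{x}}}$ be the score function of $\tilde{\mathbf{x}}$. If $\sup_{\boldsymbol{\alpha}}\|\boldsymbol{\Psi}_{\mathbf{x}}(\boldsymbol{\alpha})\|\le C$, then $\sup_{\boldsymbol{\alpha}}\|\boldsymbol{\Psi}_{\tilde{\mathbf{x}}}(\boldsymbol{\alpha})\|\le C$. *)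

theory Defs
  imports "HOL-Probability.Probability"
begin

definition score :: "(real^'k \<Rightarrow> real) \<Rightarrow> real^'k \<Rightarrow> real^'k" where
  "score f \<alpha> = (\<chi> i. frechet_derivative (\<lambda>y. ln (f y)) (at \<alpha>) (axis i 1))"

definition std_gaussian_vec :: "(real^'k) measure" where
  "std_gaussian_vec = density lborel (\<lambda>z. ennreal (\<Prod>i\<in>UNIV. std_normal_density (z $ i)))"

text \<open>N is a (possibly degenerate) Gaussian random vector with mean zero and
  covariance Cov: N has the law of A z with z standard Gaussian and A A^T = Cov.\<close>
definition gaussian_vec :: "'a measure \<Rightarrow> ('a \<Rightarrow> real^'k) \<Rightarrow> real^'k^'k \<Rightarrow> bool" where
  "gaussian_vec M N Cov \<longleftrightarrow> N \<in> borel_measurable M \<and>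
     (\<exists>A :: real^'k^'k. A ** transpose A = Cov \<and>
        distr M borel N = distr std_gaussian_vec borel (\<lambda>z. A *v z))"

end

theory Submission imports Defs begin

lemma lin_expand:
  fixes L :: "real^'k \<Rightarrow> real"
  assumes "linear L"
  shows "L u = (\<chi> i. L (axis i 1)) \<bullet> u"
proof -
  have "L u = L (\<Sum>i\<in>UNIV. (u$i) *s axis i 1)" by (simp add: basis_expansion)
  also have "\<dots> = (\<Sum>i\<in>UNIV. u$i * L (axis i 1))"
    using assms by (simp add: linear_sum linear_scale scalar_mult_eq_scaleR)
  also have "\<dots> = (\<chi> i. L (axis i 1)) \<bullet> u"
    by (simp add: inner_vec_def mult.commute)
  finally show ?thesis .
qed

locale LS =
  fixes p :: "real^'k \<Rightarrow> real" and C :: real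
  assumes pos: "\<And>a. p a > 0"
    and diff: "\<And>a. p differentiable (at a)"
    and bnd: "\<And>a. norm (score p a) \<le> C"
begin

definition L where "L x = frechet_derivative (\<lambda>y. ln (p y)) (at x)"

lemma g_deriv: "((\<lambda>y. ln (p y)) has_derivative L x) (at x)"
proof -
  obtain D where D: "(p has_derivative D) (at x)" using diff[of x] by (auto simp: differentiable_def)
  have "((\<lambda>y. ln (p y)) has_derivative (\<lambda>h. inverse (p x) * D h)) (at x)"
    using pos[of x] by (auto intro!: derivative_eq_intros D)
  then have "(\<lambda>y. ln (p y)) differentiable (at x)" by (auto simp: differentiable_def)
  then show ?thesis unfolding L_def using frechet_derivative_works by blast
qed

lemma L_linear: "linear (L x)"
  using g_deriv[of x] has_derivative_bounded_linear bounded_linear.linear by blast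

lemma L_score: "L x u = score p x \<bullet> u"
  using lin_expand[OF L_linear, of x u] by (simp add: score_def L_def)

lemma L_bound: "\<bar>L x u\<bar> \<le> C * norm u"
proof -
  have "\<bar>L x u\<bar> \<le> norm (score p x) * norm u" unfolding L_score by (rule Cauchy_Schwarz_ineq2)
  also have "\<dots> \<le> C * norm u" using bnd[of x] by (simp add: mult_right_mono)
  finally show ?thesis .
qed

lemma C_nonneg: "C \<ge> 0" using bnd[of 0] norm_ge_zero order_trans by blast

lemma onorm_L: "onorm (L x) \<le> C"
  by (rule onorm_le) (use L_bound in \<open>auto simp: real_norm_def\<close>)

lemma p_deriv: "(p has_derivative (\<lambda>h. p x * L x h)) (at x)"
proof -
  have "((\<lambda>y. exp (ln (p y))) has_derivative (\<lambda>h. exp (ln (p x)) * L x h)) (at x)"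
    using DERIV_compose_FDERIV[OF DERIV_exp g_deriv[of x]] by (simp add: mult.commute)
  moreover have "(\<lambda>y. exp (ln (p y))) = p" using pos by auto
  ultimately show ?thesis using pos[of x] by simp
qed

lemma g_lip: "\<bar>ln (p a) - ln (p b)\<bar> \<le> C * norm (a - b)"
  using differentiable_bound[of UNIV "\<lambda>y. ln (p y)" L C a b] g_deriv onorm_L by auto

lemma p_exp: "p a \<le> exp (C * norm (a - b)) * p b"
proof -
  have "ln (p a) \<le> C * norm (a - b) + ln (p b)" using g_lip[of a b] by linarith
  then have "exp (ln (p a)) \<le> exp (C * norm (a - b) + ln (p b))" by simp
  then show ?thesis using pos[of a] pos[of b] by (simp add: exp_add)
qed

lemma p_lip:
  assumes "a \<in> cball c r" "b \<in> cball c r"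
  shows "\<bar>p a - p b\<bar> \<le> C * exp (C * r) * p c * norm (a - b)"
proof -
  have "norm (p a - p b) \<le> (C * exp (C * r) * p c) * norm (a - b)"
  proof (rule differentiable_bound[of "cball c r" p "\<lambda>x h. p x * L x h"])
    show "convex (cball c r)" by simp
    show "(p has_derivative (\<lambda>h. p x * L x h)) (at x within cball c r)" for x
      using p_deriv has_derivative_at_withinI by blast
    show "onorm (\<lambda>h. p x * L x h) \<le> C * exp (C * r) * p c" if "x \<in> cball c r" for x
    proof (rule onorm_le)
      fix h
      have px: "p x \<le> exp (C * r) * p c"
      proof -
        have "p x \<le> exp (C * norm (x - c)) * p c" by (rule p_exp)
        also have "\<dots> \<le> exp (C * r) * p c"
          using that C_nonneg pos[of c] by (auto simp: dist_norm norm_minus_commute intro!: mult_right_mono mult_left_mono)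
        finally show ?thesis .
      qed
      have "norm (p x * L x h) = p x * \<bar>L x h\<bar>" using pos[of x] by (simp add: abs_mult)
      also have "\<dots> \<le> p x * (C * norm h)" using L_bound pos[of x] by (simp add: mult_left_mono)
      also have "\<dots> \<le> (exp (C * r) * p c) * (C * norm h)"
        using px C_nonneg by (intro mult_right_mono) auto
      finally show "norm (p x * L x h) \<le> C * exp (C * r) * p c * norm h" by (simp add: ac_simps)
    qed
  qed (use assms in auto)
  then show ?thesis by simp
qed

lemma p_cont: "continuous_on UNIV p"
  using diff differentiable_imp_continuous_within continuous_at_imp_continuous_on by blast

lemma p_meas[measurable]: "p \<in> borel_measurable borel"
  by (rule borel_measurable_continuous_onI[OF p_cont])

lemma L_dir: "((\<lambda>t. (ln (p (x + t *\<^sub>R h)) - ln (p x)) / t) \<longlongrightarrow> L x h) (at 0)"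
proof -
  have "((\<lambda>t. x + t *\<^sub>R h) has_derivative (\<lambda>t. t *\<^sub>R h)) (at 0)"
    by (auto intro!: derivative_eq_intros)
  from has_derivative_compose[OF this, of "\<lambda>y. ln (p y)" "L x"] g_deriv[of x]
  have "((\<lambda>t. ln (p (x + t *\<^sub>R h))) has_derivative (\<lambda>t. L x (t *\<^sub>R h))) (at 0)" by simp
  moreover have "(\<lambda>t. L x (t *\<^sub>R h)) = (\<lambda>t. t * L x h)"
    using L_linear[of x] by (simp add: linear_scale)
  moreover have "(\<lambda>t. t * L x h) = (*) (L x h)" by (auto simp: mult.commute)
  ultimately have "((\<lambda>t. ln (p (x + t *\<^sub>R h))) has_real_derivative L x h) (at 0)"
    by (simp add: has_field_derivative_def)
  then show ?thesis by (simp add: DERIV_def)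
qed

lemma L_meas[measurable]: "(\<lambda>x. L x h) \<in> borel_measurable borel"
proof (rule borel_measurable_LIMSEQ_real[where u="\<lambda>n x. (ln (p (x + inverse (real (Suc n)) *\<^sub>R h)) - ln (p x)) / inverse (real (Suc n))"])
  fix x
  have "filterlim (\<lambda>n. inverse (real (Suc n))) (at 0) sequentially"
    unfolding filterlim_at using LIMSEQ_inverse_real_of_nat by auto
  from filterlim_compose[OF L_dir this]
  show "(\<lambda>n. (ln (p (x + inverse (real (Suc n)) *\<^sub>R h)) - ln (p x)) / inverse (real (Suc n))) \<longlonglongrightarrow> L x h"
    by simp
qed measurable

end

locale LS2 = LS p C for p :: "real^'k \<Rightarrow> real" and C +
  fixes \<nu> :: "(real^'k) measure"
  assumes nu_prob: "prob_space \<nu>" and nu_sets: "sets \<nu> = sets borel"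
    and int_p: "\<And>y. integrable \<nu> (\<lambda>w. p (y - w))"
begin

lemma nu_meas[measurable_cong]: "sets \<nu> = sets borel" by (rule nu_sets)

definition q where "q y = (\<integral>w. p (y - w) \<partial>\<nu>)"
definition Q where "Q y h = (\<integral>w. p (y - w) * L (y - w) h \<partial>\<nu>)"

lemma int_Q_bound: "norm (p (y - w) * L (y - w) h) \<le> norm (p (y - w) * (C * norm h))"
proof -
  have "norm (p (y - w) * L (y - w) h) = p (y - w) * \<bar>L (y - w) h\<bar>"
    using pos[of "y - w"] by (simp add: abs_mult)
  also have "\<dots> \<le> p (y - w) * (C * norm h)" using L_bound pos[of "y-w"] by (simp add: mult_left_mono)
  finally show ?thesis
    using pos[of "y-w"] C_nonneg by (simp add: abs_mult ac_simps)
qed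

lemma int_Q: "integrable \<nu> (\<lambda>w. p (y - w) * L (y - w) h)"
  by (rule Bochner_Integration.integrable_bound[OF integrable_mult_left[OF int_p[of y], of "C * norm h"]])
     (measurable, use int_Q_bound in \<open>auto intro!: AE_I2 simp del: real_norm_def\<close>)

lemma q_pos: "q y > 0"
proof -
  interpret prob_space \<nu> by (rule nu_prob)
  have "q y \<ge> 0" unfolding q_def using pos by (simp add: less_imp_le)
  moreover have "q y \<noteq> 0"
  proof
    assume "q y = 0"
    then have "AE w in \<nu>. p (y - w) = 0"
      using integral_nonneg_eq_0_iff_AE[of \<nu> "\<lambda>w. p (y - w)"] int_p pos unfolding q_def
      by (simp add: less_imp_le)
    then have "AE w in \<nu>. False" by (rule AE_mp) (use pos in \<open>auto intro!: AE_I2 simp: less_le\<close>)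
    then show False by (simp add: AE_False)
  qed
  ultimately show ?thesis by simp
qed

lemma Q_bound: "\<bar>Q y h\<bar> \<le> C * norm h * q y"
proof -
  have "\<bar>Q y h\<bar> \<le> (\<integral>w. C * norm h * p (y - w) \<partial>\<nu>)"
    unfolding Q_def
  proof (rule integral_abs_bound_integral[OF int_Q])
    show "integrable \<nu> (\<lambda>w. C * norm h * p (y - w))" using int_p by simp
    fix w
    have "\<bar>p (y - w) * L (y - w) h\<bar> = p (y - w) * \<bar>L (y - w) h\<bar>"
      using pos[of "y - w"] by (simp add: abs_mult)
    also have "\<dots> \<le> p (y - w) * (C * norm h)" using L_bound pos[of "y-w"] by (simp add: mult_left_mono)
    finally show "\<bar>p (y - w) * L (y - w) h\<bar> \<le> C * norm h * p (y - w)" by (simp add: ac_simps)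
  qed
  also have "\<dots> = C * norm h * q y" unfolding q_def by simp
  finally show ?thesis .
qed

lemma Q_lin: "bounded_linear (Q y)"
proof (rule bounded_linear_intro[where K="C * q y"])
  fix a b
  show "Q y (a + b) = Q y a + Q y b"
    unfolding Q_def using L_linear[of "y - _"] int_Q
    by (simp add: linear_add distrib_left)
  fix r :: real and x
  show "Q y (r *\<^sub>R x) = r *\<^sub>R Q y x"
    unfolding Q_def using L_linear[of "y - _"]
    by (simp add: linear_scale ac_simps)
next
  fix x show "norm (Q y x) \<le> norm x * (C * q y)" using Q_bound[of y x] by (simp add: ac_simps)
qed

definition R where "R y h w = p (y + h - w) - p (y - w) - p (y - w) * L (y - w) h"

lemma R_meas[measurable]: "(\<lambda>w. R y h w) \<in> borel_measurable \<nu>"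
  unfolding R_def by measurable

lemma R_int: "integrable \<nu> (R y h)"
  unfolding R_def using int_p[of "y + h"] int_p[of y] int_Q[of y h]
  by (intro Bochner_Integration.integrable_diff) auto

lemma R_integral: "q (y + h) - q y - Q y h = (\<integral>w. R y h w \<partial>\<nu>)"
  unfolding R_def q_def Q_def using int_p[of "y + h"] int_p[of y] int_Q[of y h]
  by (simp add: integral_diff integrable_diff)

lemma R_bound:
  assumes "h \<noteq> 0" "norm h \<le> 1"
  shows "norm (\<bar>R y h w\<bar> / norm h) \<le> (C * exp C + C) * p (y - w)"
proof -
  have "\<bar>p (y + h - w) - p (y - w)\<bar> \<le> C * exp (C * 1) * p (y - w) * norm ((y + h - w) - (y - w))"
    by (rule p_lip) (use assms in \<open>auto simp: dist_norm\<close>)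
  then have a: "\<bar>p (y + h - w) - p (y - w)\<bar> \<le> C * exp C * p (y - w) * norm h" by simp
  have b: "\<bar>p (y - w) * L (y - w) h\<bar> \<le> p (y - w) * (C * norm h)"
    using int_Q_bound[of y w h] pos[of "y-w"] C_nonneg by simp
  have "\<bar>R y h w\<bar> \<le> C * exp C * p (y - w) * norm h + p (y - w) * (C * norm h)"
    unfolding R_def using a b by linarith
  also have "\<dots> = ((C * exp C + C) * p (y - w)) * norm h" by (simp add: algebra_simps)
  finally have "\<bar>R y h w\<bar> \<le> ((C * exp C + C) * p (y - w)) * norm h" .
  then show ?thesis using assms by (simp add: divide_le_eq)
qed

lemma R_lim: "((\<lambda>h. \<bar>R y h w\<bar> / norm h) \<longlongrightarrow> 0) (at 0)"
proof -
  have "((\<lambda>h. norm (p ((y - w) + h) - p (y - w) - p (y - w) * L (y - w) h) / norm h) \<longlongrightarrow> 0) (at 0)"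
    using p_deriv[of "y - w"] unfolding has_derivative_at by blast
  moreover have "\<And>h. p (y - w + h) = p (y + h - w)" by (simp add: diff_add_eq)
  ultimately show ?thesis unfolding R_def by simp
qed

lemma G_lim: "((\<lambda>h. \<integral>w. \<bar>R y h w\<bar> / norm h \<partial>\<nu>) \<longlongrightarrow> 0) (at 0)"
proof (subst tendsto_at_iff_sequentially, intro allI impI)
  fix X :: "nat \<Rightarrow> real^'k"
  assume X0: "\<forall>i. X i \<in> UNIV - {0}" and X: "X \<longlonglongrightarrow> 0"
  have "\<forall>\<^sub>F n in sequentially. norm (X n) < 1"
    using order_tendstoD(2)[OF tendsto_norm[OF X]] by simp
  then obtain N0 where N0: "\<And>n. n \<ge> N0 \<Longrightarrow> norm (X n) < 1"
    by (auto simp: eventually_sequentially)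
  have XN: "filterlim (\<lambda>n. X (n + N0)) (at 0) sequentially"
    unfolding filterlim_at using X0 LIMSEQ_ignore_initial_segment[OF X, of N0] by auto
  have "(\<lambda>n. \<integral>w. \<bar>R y (X (n + N0)) w\<bar> / norm (X (n + N0)) \<partial>\<nu>) \<longlonglongrightarrow> (\<integral>w. 0 \<partial>\<nu>)"
  proof (rule integral_dominated_convergence[where w="\<lambda>w. (C * exp C + C) * p (y - w)"])
    show "integrable \<nu> (\<lambda>w. (C * exp C + C) * p (y - w))" using int_p by simp
    show "AE w in \<nu>. (\<lambda>n. \<bar>R y (X (n + N0)) w\<bar> / norm (X (n + N0))) \<longlonglongrightarrow> 0"
      by (intro AE_I2 filterlim_compose[OF R_lim XN])
    show "AE w in \<nu>. norm (\<bar>R y (X (n + N0)) w\<bar> / norm (X (n + N0))) \<le> (C * exp C + C) * p (y - w)" for n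
      using X0 N0[of "n + N0"] by (intro AE_I2 R_bound) auto
  qed measurable
  then have "(\<lambda>n. \<integral>w. \<bar>R y (X (n + N0)) w\<bar> / norm (X (n + N0)) \<partial>\<nu>) \<longlonglongrightarrow> 0" by simp
  then show "((\<lambda>h. \<integral>w. \<bar>R y h w\<bar> / norm h \<partial>\<nu>) \<circ> X) \<longlonglongrightarrow> 0"
    using LIMSEQ_offset[where k=N0 and f="(\<lambda>h. \<integral>w. \<bar>R y h w\<bar> / norm h \<partial>\<nu>) \<circ> X"] by (simp add: o_def)
qed

lemma q_deriv: "(q has_derivative Q y) (at y)"
  unfolding has_derivative_at
proof (intro conjI Q_lin)
  show "((\<lambda>h. norm (q (y + h) - q y - Q y h) / norm h) \<longlongrightarrow> 0) (at 0)"
  proof (rule tendsto_sandwich[OF _ _ tendsto_const G_lim])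
    show "\<forall>\<^sub>F h in at 0. 0 \<le> norm (q (y + h) - q y - Q y h) / norm h" by simp
    show "\<forall>\<^sub>F h in at 0. norm (q (y + h) - q y - Q y h) / norm h \<le> (\<integral>w. \<bar>R y h w\<bar> / norm h \<partial>\<nu>)"
    proof (intro always_eventually allI)
      fix h
      have "norm (q (y + h) - q y - Q y h) \<le> (\<integral>w. \<bar>R y h w\<bar> \<partial>\<nu>)"
        unfolding R_integral real_norm_def
        by (rule integral_abs_bound_integral) (use R_int in auto)
      then show "norm (q (y + h) - q y - Q y h) / norm h \<le> (\<integral>w. \<bar>R y h w\<bar> / norm h \<partial>\<nu>)"
        by (simp add: divide_right_mono)
    qed
  qed
qed

lemma score_q: "norm (score q y) \<le> C"
proof -
  have d: "((\<lambda>x. ln (q x)) has_derivative (\<lambda>h. Q y h * inverse (q y))) (at y)"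
    using DERIV_compose_FDERIV[OF DERIV_ln[OF q_pos[of y]] q_deriv[of y]] by simp
  have fd: "frechet_derivative (\<lambda>x. ln (q x)) (at y) = (\<lambda>h. Q y h * inverse (q y))"
    using frechet_derivative_at[OF d] by simp
  have lin: "linear (\<lambda>h. Q y h * inverse (q y))"
    using d has_derivative_bounded_linear bounded_linear.linear by blast
  let ?s = "score q y"
  have "?s \<bullet> ?s = Q y ?s * inverse (q y)"
    using lin_expand[OF lin, of ?s] by (simp add: score_def fd)
  also have "\<dots> \<le> C * norm ?s"
  proof -
    have "\<bar>Q y ?s\<bar> \<le> C * norm ?s * q y" by (rule Q_bound)
    then have "Q y ?s / q y \<le> C * norm ?s" using q_pos[of y] by (simp add: divide_le_eq)
    then show ?thesis by (simp add: divide_inverse)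
  qed
  finally have "norm ?s * norm ?s \<le> C * norm ?s" by (simp add: power2_norm_eq_inner[symmetric] power2_eq_square)
  then show ?thesis using C_nonneg
    by (cases "norm ?s = 0") (auto simp: mult_le_cancel_right)
qed

lemma q_diff: "q differentiable (at y)"
  using q_deriv by (auto simp: differentiable_def)

end
lemma conv_emeasure:
  fixes p :: "real^'k \<Rightarrow> real" and \<nu> :: "(real^'k) measure"
  assumes [measurable]: "p \<in> borel_measurable borel"
    and fm: "finite_measure (density lborel (\<lambda>x. ennreal (p x)))" "finite_measure \<nu>"
    and ns[measurable_cong]: "sets \<nu> = sets borel"
    and A[measurable]: "A \<in> sets borel"
  shows "emeasure (density lborel (\<lambda>x. ennreal (p x)) \<star> \<nu>) A =
     (\<integral>\<^sup>+ y. (\<integral>\<^sup>+ w. ennreal (p (y - w)) \<partial>\<nu>) * indicator A y \<partial>lborel)"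
proof -
  interpret nu: finite_measure \<nu> by (rule fm)
  interpret pair_sigma_finite lborel \<nu> ..
  have "emeasure (density lborel (\<lambda>x. ennreal (p x)) \<star> \<nu>) A =
      (\<integral>\<^sup>+x. \<integral>\<^sup>+w. indicator A (x + w) \<partial>\<nu> \<partial>(density lborel (\<lambda>x. ennreal (p x))))"
    by (rule convolution_emeasure') (use fm ns in auto)
  also have "\<dots> = (\<integral>\<^sup>+x. ennreal (p x) * (\<integral>\<^sup>+w. indicator A (x + w) \<partial>\<nu>) \<partial>lborel)"
    by (rule nn_integral_density) measurable
  also have "\<dots> = (\<integral>\<^sup>+x. \<integral>\<^sup>+w. ennreal (p x) * indicator A (x + w) \<partial>\<nu> \<partial>lborel)"
    by (intro nn_integral_cong nn_integral_cmult[symmetric]) measurable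
  also have "\<dots> = (\<integral>\<^sup>+w. \<integral>\<^sup>+x. ennreal (p x) * indicator A (x + w) \<partial>lborel \<partial>\<nu>)"
    by (rule Fubini'[symmetric]) measurable
  also have "\<dots> = (\<integral>\<^sup>+w. \<integral>\<^sup>+y. ennreal (p (y - w)) * indicator A y \<partial>lborel \<partial>\<nu>)"
  proof (rule nn_integral_cong)
    fix w :: "real^'k"
    have "(\<integral>\<^sup>+y. ennreal (p (y - w)) * indicator A y \<partial>lborel) =
        (\<integral>\<^sup>+y. ennreal (p (y - w)) * indicator A y \<partial>(distr lborel borel ((+) w)))"
      by (simp add: lborel_distr_plus)
    also have "\<dots> = (\<integral>\<^sup>+x. ennreal (p (w + x - w)) * indicator A (w + x) \<partial>lborel)"
      by (rule nn_integral_distr) measurable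
    also have "\<dots> = (\<integral>\<^sup>+x. ennreal (p x) * indicator A (x + w) \<partial>lborel)"
      by (simp add: add.commute)
    finally show "(\<integral>\<^sup>+x. ennreal (p x) * indicator A (x + w) \<partial>lborel) =
        (\<integral>\<^sup>+y. ennreal (p (y - w)) * indicator A y \<partial>lborel)" by simp
  qed
  also have "\<dots> = (\<integral>\<^sup>+y. \<integral>\<^sup>+w. ennreal (p (y - w)) * indicator A y \<partial>\<nu> \<partial>lborel)"
    by (rule Fubini') measurable
  also have "\<dots> = (\<integral>\<^sup>+ y. (\<integral>\<^sup>+ w. ennreal (p (y - w)) \<partial>\<nu>) * indicator A y \<partial>lborel)"
    by (intro nn_integral_cong nn_integral_multc) measurable
  finally show ?thesis .
qed

theorem lemma2:
  fixes M :: "'a measure" and X N :: "'a \<Rightarrow> real^'k"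
    and p :: "real^'k \<Rightarrow> real" and Cov :: "real^'k^'k" and C :: real
  assumes "prob_space M"
    and "distributed M lborel X (\<lambda>x. ennreal (p x))"
    and "\<forall>\<alpha>. p \<alpha> > 0"
    and "\<forall>\<alpha>. p differentiable (at \<alpha>)"
    and "gaussian_vec M N Cov"
    and "prob_space.indep_var M borel X borel N"
    and "\<forall>\<alpha>. norm (score p \<alpha>) \<le> C"
  shows "\<exists>q :: real^'k \<Rightarrow> real.
           distributed M lborel (\<lambda>\<omega>. X \<omega> + N \<omega>) (\<lambda>x. ennreal (q x)) \<and>
           (\<forall>\<alpha>. q \<alpha> > 0) \<and> (\<forall>\<alpha>. q differentiable (at \<alpha>)) \<and>
           (\<forall>\<alpha>. norm (score q \<alpha>) \<le> C)"
proof -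
  interpret M: prob_space M by fact
  interpret P: LS p C using assms(3,4,7) by unfold_locales auto
  have pm[measurable]: "p \<in> borel_measurable borel" by (rule P.p_meas)
  have Xm[measurable]: "X \<in> borel_measurable M"
    using assms(2) unfolding distributed_def by (simp cong: measurable_cong_sets)
  have Nm[measurable]: "N \<in> borel_measurable M"
    using assms(5) unfolding gaussian_vec_def by simp
  define \<nu> where "\<nu> = distr M borel N"
  have nu_prob: "prob_space \<nu>" unfolding \<nu>_def by (rule M.prob_space_distr) simp
  have nu_sets[measurable_cong]: "sets \<nu> = sets borel" unfolding \<nu>_def by simp
  define \<mu> where "\<mu> = density lborel (\<lambda>x. ennreal (p x))"
  have mu_eq: "distr M borel X = \<mu>"
  proof -
    have "distr M borel X = distr M lborel X" by (rule distr_cong) auto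
    also have "\<dots> = \<mu>" using assms(2) unfolding distributed_def \<mu>_def by simp
    finally show ?thesis .
  qed
  have mu_prob: "prob_space \<mu>" unfolding mu_eq[symmetric] by (rule M.prob_space_distr) simp
  have sum_eq: "distr M borel (\<lambda>\<omega>. X \<omega> + N \<omega>) = (\<mu> \<star> \<nu>)"
    unfolding mu_eq[symmetric] \<nu>_def by (rule M.sum_indep_random_variable[OF assms(6)]) simp_all
  define qe where "qe y = (\<integral>\<^sup>+ w. ennreal (p (y - w)) \<partial>\<nu>)" for y
  have conv: "emeasure (\<mu> \<star> \<nu>) A = (\<integral>\<^sup>+ y. qe y * indicator A y \<partial>lborel)" if "A \<in> sets borel" for A
    unfolding \<mu>_def qe_def
    by (rule conv_emeasure) (use that mu_prob nu_prob nu_sets in \<open>auto simp: \<mu>_def prob_space_def\<close>)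
  have tot: "(\<integral>\<^sup>+ y. qe y \<partial>lborel) = 1"
  proof -
    have "(\<integral>\<^sup>+ y. qe y \<partial>lborel) = emeasure (\<mu> \<star> \<nu>) UNIV" using conv[of UNIV] by simp
    also have "\<dots> = emeasure (distr M borel (\<lambda>\<omega>. X \<omega> + N \<omega>)) (space (distr M borel (\<lambda>\<omega>. X \<omega> + N \<omega>)))"
      unfolding sum_eq by simp
    also have "\<dots> = 1" by (rule prob_space.emeasure_space_1, rule M.prob_space_distr) simp
    finally show ?thesis .
  qed
  have qe_mono: "qe y0 \<le> ennreal (exp (C * norm (y0 - y))) * qe y" for y0 y
  proof -
    have "qe y0 \<le> (\<integral>\<^sup>+ w. ennreal (exp (C * norm (y0 - y))) * ennreal (p (y - w)) \<partial>\<nu>)"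
      unfolding qe_def
    proof (rule nn_integral_mono)
      fix w
      have "p (y0 - w) \<le> exp (C * norm ((y0 - w) - (y - w))) * p (y - w)" by (rule P.p_exp)
      then show "ennreal (p (y0 - w)) \<le> ennreal (exp (C * norm (y0 - y))) * ennreal (p (y - w))"
        using P.pos by (simp add: ennreal_mult[symmetric] less_imp_le)
    qed
    also have "\<dots> = ennreal (exp (C * norm (y0 - y))) * qe y"
      unfolding qe_def by (rule nn_integral_cmult) measurable
    finally show ?thesis .
  qed
  have fin: "qe y < \<infinity>" for y
  proof (rule ccontr)
    assume "\<not> qe y < \<infinity>"
    then have inf: "qe y = \<infinity>" by (simp add: less_top[symmetric])
    have "qe z = \<infinity>" for z
    proof -
      have "ennreal (exp (C * norm (y - z))) * qe z = \<infinity>" using qe_mono[of y z] inf by (simp add: top_unique)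
      then show ?thesis by (simp add: ennreal_mult_eq_top_iff)
    qed
    then have "(\<integral>\<^sup>+ y. qe y \<partial>lborel) = (\<integral>\<^sup>+ (y::real^'k). \<infinity> \<partial>lborel)" by (intro nn_integral_cong) simp
    also have "\<dots> = \<infinity>" by (simp add: nn_integral_const)
    finally show False using tot by simp
  qed
  have int_p: "integrable \<nu> (\<lambda>w. p (y - w))" for y
    by (rule integrableI_nonneg) (use fin[of y] P.pos in \<open>auto simp: qe_def less_imp_le\<close>)
  interpret Q: LS2 p C \<nu>
    unfolding LS2_def LS2_axioms_def using P.LS_axioms nu_prob nu_sets int_p by blast
  have qe_q: "qe y = ennreal (Q.q y)" for y
    unfolding qe_def Q.q_def
    by (rule nn_integral_eq_integral[OF int_p]) (use P.pos in \<open>auto simp: less_imp_le\<close>)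
  have qm[measurable]: "Q.q \<in> borel_measurable borel"
    by (intro borel_measurable_continuous_onI continuous_at_imp_continuous_on ballI
        differentiable_imp_continuous_within Q.q_diff)
  show ?thesis
  proof (intro exI[of _ Q.q] conjI allI Q.q_pos Q.q_diff Q.score_q)
    show "distributed M lborel (\<lambda>\<omega>. X \<omega> + N \<omega>) (\<lambda>x. ennreal (Q.q x))"
      unfolding distributed_def
    proof (intro conjI)
      show "distr M lborel (\<lambda>\<omega>. X \<omega> + N \<omega>) = density lborel (\<lambda>x. ennreal (Q.q x))"
      proof (rule measure_eqI)
        fix A assume "A \<in> sets (distr M lborel (\<lambda>\<omega>. X \<omega> + N \<omega>))"
        then have A[measurable]: "A \<in> sets borel" by simp
        have "emeasure (distr M lborel (\<lambda>\<omega>. X \<omega> + N \<omega>)) A = emeasure (distr M borel (\<lambda>\<omega>. X \<omega> + N \<omega>)) A"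
          by (simp add: emeasure_distr)
        also have "\<dots> = (\<integral>\<^sup>+ y. qe y * indicator A y \<partial>lborel)" unfolding sum_eq by (rule conv[OF A])
        also have "\<dots> = emeasure (density lborel (\<lambda>x. ennreal (Q.q x))) A"
          by (simp add: emeasure_density qe_q)
        finally show "emeasure (distr M lborel (\<lambda>\<omega>. X \<omega> + N \<omega>)) A = emeasure (density lborel (\<lambda>x. ennreal (Q.q x))) A" .
      qed simp
    qed measurable
  qed
qed

end
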